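(* Consider the system $$\frac{df}{dt}= r\alpha f m(1-f-m)-(1+h)f,\qquad \frac{dm}{dt}=(1-r)\alpha f m(1-f-m)+(s-1)m,$$ with $0<r<1$, $\alpha>0$, $h\ge 0$, $0\le s<1$. Set $\mu=\frac{(1-r)(1+h)}{r(1-s)}$ and define $$s^*=\frac{1}{r}+\frac{1-r}{4}\Big(\frac{4h}{r}-\alpha\Big),\qquad h_*=\frac{r}{4}\Big(\alpha-\frac{4}{r(1-r)}\Big),\qquad h^*=\frac{r}{4}\Big(\alpha-\frac{4}{r}\Big).$$ The interior equilibria of the system are $E_i^*=(f_i^*,\mu f_i^* )$, $i=1,2$, with $$f^*_{1,2}=\frac{1}{2(1+\mu)}\left\{1\pm\sqrt{1-\frac{4(1+\mu)(1+h)}{r\alpha\mu}}\right\},$$ and these interior equilibria exist (are real and positive) if either (i) $s\ge s^*$ and $h_*<h<h^*$, or (ii) $0\le h\le h_*$ and $\alpha>\frac{4}{r(1-r)}$.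
   Context: This is the nondimensionalized female-harvesting male-stocking (FHMS) mating model without Allee effect: $f,m\ge 0$ are scaled female and male population densities, $r$ is the primary sex ratio, $\alpha$ the scaled reproduction rate, $h$ the scaled female harvesting rate and $s$ the scaled male stocking rate. An interior equilibrium is an equilibrium with $f>0$, $m>0$. *)

theory Defs
  imports Complex_Main
begin

definition fhms_df :: "real \<Rightarrow> real \<Rightarrow> real \<Rightarrow> real \<Rightarrow> real \<Rightarrow> real" where
  "fhms_df r \<alpha> h f m = r * \<alpha> * f * m * (1 - f - m) - (1 + h) * f"

definition fhms_dm :: "real \<Rightarrow> real \<Rightarrow> real \<Rightarrow> real \<Rightarrow> real \<Rightarrow> real" where
  "fhms_dm r \<alpha> s f m = (1 - r) * \<alpha> * f * m * (1 - f - m) + (s - 1) * m"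

definition interior_equilibria :: "real \<Rightarrow> real \<Rightarrow> real \<Rightarrow> real \<Rightarrow> (real \<times> real) set" where
  "interior_equilibria r \<alpha> h s =
     {(f, m). f > 0 \<and> m > 0 \<and> fhms_df r \<alpha> h f m = 0 \<and> fhms_dm r \<alpha> s f m = 0}"

definition fhms_mu :: "real \<Rightarrow> real \<Rightarrow> real \<Rightarrow> real" where
  "fhms_mu r h s = ((1 - r) * (1 + h)) / (r * (1 - s))"

definition s_star :: "real \<Rightarrow> real \<Rightarrow> real \<Rightarrow> real" where
  "s_star r \<alpha> h = 1 / r + (1 - r) / 4 * (4 * h / r - \<alpha>)"

definition h_lower :: "real \<Rightarrow> real \<Rightarrow> real" where
  "h_lower r \<alpha> = r / 4 * (\<alpha> - 4 / (r * (1 - r)))"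

definition h_upper :: "real \<Rightarrow> real \<Rightarrow> real" where
  "h_upper r \<alpha> = r / 4 * (\<alpha> - 4 / r)"

definition fhms_disc :: "real \<Rightarrow> real \<Rightarrow> real \<Rightarrow> real \<Rightarrow> real" where
  "fhms_disc r \<alpha> h s =
     1 - 4 * (1 + fhms_mu r h s) * (1 + h) / (r * \<alpha> * fhms_mu r h s)"

definition f_star1 :: "real \<Rightarrow> real \<Rightarrow> real \<Rightarrow> real \<Rightarrow> real" where
  "f_star1 r \<alpha> h s = 1 / (2 * (1 + fhms_mu r h s)) * (1 + sqrt (fhms_disc r \<alpha> h s))"

definition f_star2 :: "real \<Rightarrow> real \<Rightarrow> real \<Rightarrow> real \<Rightarrow> real" where
  "f_star2 r \<alpha> h s = 1 / (2 * (1 + fhms_mu r h s)) * (1 - sqrt (fhms_disc r \<alpha> h s))"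

end

theory Submission
  imports Defs
begin

lemma divgen: "(K::real) \<noteq> 0 \<Longrightarrow> (X = c / K) = (K * X = c)"
  by (auto simp: field_simps)

theorem mainTheorem1:
  fixes r \<alpha> h s :: real
  assumes "0 < r" "r < 1" "\<alpha> > 0" "h \<ge> 0" "0 \<le> s" "s < 1"
    and "(s \<ge> s_star r \<alpha> h \<and> h_lower r \<alpha> < h \<and> h < h_upper r \<alpha>)
         \<or> (0 \<le> h \<and> h \<le> h_lower r \<alpha> \<and> \<alpha> > 4 / (r * (1 - r)))"
  shows "fhms_disc r \<alpha> h s \<ge> 0
    \<and> f_star1 r \<alpha> h s > 0 \<and> f_star2 r \<alpha> h s > 0
    \<and> interior_equilibria r \<alpha> h s =
        {(f_star1 r \<alpha> h s, fhms_mu r h s * f_star1 r \<alpha> h s),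
         (f_star2 r \<alpha> h s, fhms_mu r h s * f_star2 r \<alpha> h s)}"
proof -
  note a = assms(1-6)
  define \<mu> where "\<mu> = fhms_mu r h s"
  define D where "D = fhms_disc r \<alpha> h s"
  have mu: "\<mu> = ((1 - r) * (1 + h)) / (r * (1 - s))" by (simp add: \<mu>_def fhms_mu_def)
  have mupos: "\<mu> > 0" using a by (simp add: mu)
  have Ddef: "D = 1 - 4 * (1 + \<mu>) * (1 + h) / (r * \<alpha> * \<mu>)"
    by (simp add: D_def fhms_disc_def \<mu>_def)
  have sge: "s \<ge> s_star r \<alpha> h"
    using assms(7)
  proof
    assume H: "0 \<le> h \<and> h \<le> h_lower r \<alpha> \<and> \<alpha> > 4 / (r * (1 - r))"
    have "h_lower r \<alpha> = r * \<alpha> / 4 - 1 / (1 - r)" using a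
      by (simp add: h_lower_def field_simps)
    hence "h \<le> r * \<alpha> / 4 - 1 / (1 - r)" using H by linarith
    hence "(1 - r) * h / r \<le> (1 - r) * (r * \<alpha> / 4 - 1 / (1 - r)) / r"
      using a by (intro divide_right_mono mult_left_mono) auto
    also have "\<dots> = (1 - r) * \<alpha> / 4 - 1 / r" using a by (simp add: field_simps)
    finally have X: "(1 - r) * h / r \<le> (1 - r) * \<alpha> / 4 - 1 / r" .
    have "s_star r \<alpha> h = 1 / r + (1 - r) * h / r - (1 - r) * \<alpha> / 4"
      unfolding s_star_def using a by (simp add: field_simps)
    hence "s_star r \<alpha> h \<le> 0" using X by linarith
    thus ?thesis using a by linarith
  qed auto
  have P: "(1 - r) * \<alpha> * r \<ge> 4 * (1 - s) * r + 4 * (1 - r) * (1 + h)"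
  proof -
    have Y: "s * (4 * r) \<ge> s_star r \<alpha> h * (4 * r)"
      using sge a by (intro mult_right_mono) auto
    have "s_star r \<alpha> h * (4 * r) = 4 + (1 - r) * (4 * h - \<alpha> * r)"
      using a by (simp add: s_star_def field_simps)
    hence "4 * s * r \<ge> 4 + (1 - r) * (4 * h - \<alpha> * r)"
      using Y by (simp add: mult.commute mult.left_commute)
    thus ?thesis by (simp add: algebra_simps)
  qed
  have E1: "r * \<alpha> * \<mu> * (r * (1 - s)) = (1 + h) * ((1 - r) * \<alpha> * r)"
    using a by (simp add: mu field_simps)
  have E2: "4 * (1 + \<mu>) * (1 + h) * (r * (1 - s)) = (1 + h) * (4 * (1 - s) * r + 4 * (1 - r) * (1 + h))"
    using a by (simp add: mu field_simps)
  have "4 * (1 + \<mu>) * (1 + h) * (r * (1 - s)) \<le> r * \<alpha> * \<mu> * (r * (1 - s))"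
    unfolding E1 E2 using P a by (intro mult_left_mono) auto
  hence key: "r * \<alpha> * \<mu> \<ge> 4 * (1 + \<mu>) * (1 + h)"
    using a by (simp add: mult_le_cancel_right)
  have rm: "r * \<alpha> * \<mu> > 0" using a mupos by simp
  have D0: "D \<ge> 0" unfolding Ddef using key rm by (simp add: field_simps)
  have "4 * (1 + \<mu>) * (1 + h) / (r * \<alpha> * \<mu>) > 0"
    using rm a mupos by (intro divide_pos_pos mult_pos_pos) auto
  hence D1: "D < 1" unfolding Ddef by linarith
  have sq1: "sqrt D < 1" using D1 D0 by (metis real_sqrt_lt_1_iff)
  have sq0: "sqrt D \<ge> 0" using D0 by simp
  have f1: "f_star1 r \<alpha> h s = (1 + sqrt D) / (2 * (1 + \<mu>))"
    by (simp add: f_star1_def \<mu>_def D_def)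
  have f2: "f_star2 r \<alpha> h s = (1 - sqrt D) / (2 * (1 + \<mu>))"
    by (simp add: f_star2_def \<mu>_def D_def)
  have p1: "f_star1 r \<alpha> h s > 0" unfolding f1 using sq0 mupos by (intro divide_pos_pos mult_pos_pos; linarith)
  have p2: "f_star2 r \<alpha> h s > 0" unfolding f2 using sq1 mupos by (intro divide_pos_pos mult_pos_pos; linarith)
  have sqD: "sqrt D * sqrt D = D" using D0 by simp
  have quad: "(2 * (1 + \<mu>) * f - 1)^2 = D \<longleftrightarrow> r * \<alpha> * \<mu> * f * (1 - (1 + \<mu>) * f) = 1 + h" for f
  proof -
    have "(2 * (1 + \<mu>) * f - 1)^2 = 1 - 4 * (1 + \<mu>) * (f - (1 + \<mu>) * f^2)"
      by (simp add: power2_eq_square algebra_simps)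
    moreover have "D = 1 - 4 * (1 + \<mu>) * ((1 + h) / (r * \<alpha> * \<mu>))"
      unfolding Ddef by simp
    ultimately have "(2 * (1 + \<mu>) * f - 1)^2 = D \<longleftrightarrow> (4 * (1 + \<mu>)) * (f - (1 + \<mu>) * f^2) = (4 * (1 + \<mu>)) * ((1 + h) / (r * \<alpha> * \<mu>))"
      by (simp only:) linarith
    also have "\<dots> \<longleftrightarrow> f - (1 + \<mu>) * f^2 = (1 + h) / (r * \<alpha> * \<mu>)"
    proof -
      have nz: "4 * (1 + \<mu>) \<noteq> 0" using mupos by simp
      show ?thesis using nz by (simp only: mult_cancel_left) simp
    qed
    also have "\<dots> \<longleftrightarrow> r * \<alpha> * \<mu> * (f - (1 + \<mu>) * f^2) = 1 + h"
    proof -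
      have g: "(X = (1 + h) / (r * \<alpha> * \<mu>)) = (r * \<alpha> * \<mu> * X = 1 + h)" for X
        using rm by (intro divgen) linarith
      show ?thesis by (rule g)
    qed
    finally show ?thesis by (simp add: power2_eq_square algebra_simps)
  qed
  have muid: "(1 - r) * (1 + h) = \<mu> * r * (1 - s)" using a by (simp add: mu)
  have set: "interior_equilibria r \<alpha> h s =
        {(f_star1 r \<alpha> h s, \<mu> * f_star1 r \<alpha> h s), (f_star2 r \<alpha> h s, \<mu> * f_star2 r \<alpha> h s)}"
  proof (rule set_eqI, clarify)
    fix f m
    show "(f, m) \<in> interior_equilibria r \<alpha> h s \<longleftrightarrow>
      (f, m) \<in> {(f_star1 r \<alpha> h s, \<mu> * f_star1 r \<alpha> h s), (f_star2 r \<alpha> h s, \<mu> * f_star2 r \<alpha> h s)}"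
    proof
      assume "(f, m) \<in> interior_equilibria r \<alpha> h s"
      hence fp: "f > 0" and mp: "m > 0" and e1: "r * \<alpha> * f * m * (1 - f - m) - (1 + h) * f = 0"
        and e2: "(1 - r) * \<alpha> * f * m * (1 - f - m) + (s - 1) * m = 0"
        by (auto simp: interior_equilibria_def fhms_df_def fhms_dm_def)
      have g1: "r * \<alpha> * m * (1 - f - m) = 1 + h"
      proof -
        have "f * (r * \<alpha> * m * (1 - f - m) - (1 + h)) = r * \<alpha> * f * m * (1 - f - m) - (1 + h) * f"
          by (simp add: algebra_simps)
        hence "f * (r * \<alpha> * m * (1 - f - m) - (1 + h)) = 0" using e1 by simp
        thus ?thesis using fp by simp
      qed
      have g2: "(1 - r) * \<alpha> * f * (1 - f - m) = 1 - s"
      proof -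
        have "m * ((1 - r) * \<alpha> * f * (1 - f - m) - (1 - s)) = (1 - r) * \<alpha> * f * m * (1 - f - m) + (s - 1) * m"
          by (simp add: algebra_simps)
        hence "m * ((1 - r) * \<alpha> * f * (1 - f - m) - (1 - s)) = 0" using e2 by simp
        thus ?thesis using mp by simp
      qed
      have gne: "1 - f - m \<noteq> 0" using g1 a by auto
      have "((1 - r) * f * (1 + h)) * (\<alpha> * (1 - f - m)) = ((1 - s) * r * m) * (\<alpha> * (1 - f - m))"
      proof -
        have "((1 - r) * f * (1 + h)) * (\<alpha> * (1 - f - m)) = ((1 - r) * \<alpha> * f * (1 - f - m)) * (1 + h)"
          by (simp add: algebra_simps)
        also have "\<dots> = (1 - s) * (r * \<alpha> * m * (1 - f - m))" using g1 g2 by simp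
        finally show ?thesis by (simp add: algebra_simps)
      qed
      hence Q: "(1 - r) * f * (1 + h) = (1 - s) * r * m" using gne a by simp
      have "((1 - s) * r) * (\<mu> * f) = (\<mu> * r * (1 - s)) * f" by (simp add: algebra_simps)
      also have "\<dots> = ((1 - r) * (1 + h)) * f" using muid by simp
      also have "\<dots> = (1 - r) * f * (1 + h)" by (simp add: algebra_simps)
      also have "\<dots> = ((1 - s) * r) * m" using Q by simp
      finally have "((1 - s) * r) * (\<mu> * f) = ((1 - s) * r) * m" .
      hence mm: "m = \<mu> * f" using a by simp
      have "r * \<alpha> * \<mu> * f * (1 - (1 + \<mu>) * f) = r * \<alpha> * m * (1 - f - m)"
        unfolding mm by (simp add: algebra_simps)
      hence "r * \<alpha> * \<mu> * f * (1 - (1 + \<mu>) * f) = 1 + h" using g1 by simp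
      hence "(2 * (1 + \<mu>) * f - 1)^2 = (sqrt D)^2" using quad D0 by simp
      hence "2 * (1 + \<mu>) * f - 1 = sqrt D \<or> 2 * (1 + \<mu>) * f - 1 = - sqrt D"
        by (simp add: power2_eq_iff)
      hence "f = f_star1 r \<alpha> h s \<or> f = f_star2 r \<alpha> h s"
        unfolding f1 f2 using mupos by (auto simp: field_simps)
      thus "(f, m) \<in> {(f_star1 r \<alpha> h s, \<mu> * f_star1 r \<alpha> h s), (f_star2 r \<alpha> h s, \<mu> * f_star2 r \<alpha> h s)}"
        using mm by auto
    next
      assume H: "(f, m) \<in> {(f_star1 r \<alpha> h s, \<mu> * f_star1 r \<alpha> h s), (f_star2 r \<alpha> h s, \<mu> * f_star2 r \<alpha> h s)}"
      hence mm: "m = \<mu> * f" and fp: "f > 0" using p1 p2 by auto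
      have "2 * (1 + \<mu>) * f - 1 = sqrt D \<or> 2 * (1 + \<mu>) * f - 1 = - sqrt D"
        using H mupos unfolding f1 f2 by (auto simp: field_simps)
      hence "(2 * (1 + \<mu>) * f - 1)^2 = D" using sqD by (auto simp: power2_eq_square)
      hence q: "r * \<alpha> * \<mu> * f * (1 - (1 + \<mu>) * f) = 1 + h" using quad by simp
      have "fhms_df r \<alpha> h f m = f * (r * \<alpha> * \<mu> * f * (1 - (1 + \<mu>) * f) - (1 + h))"
        unfolding fhms_df_def mm by (simp add: algebra_simps)
      hence d1: "fhms_df r \<alpha> h f m = 0" using q by simp
      have "(1 - r) * \<alpha> * f * (1 - (1 + \<mu>) * f) * (r * \<mu>) = (1 - r) * (r * \<alpha> * \<mu> * f * (1 - (1 + \<mu>) * f))"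
        by (simp add: algebra_simps)
      also have "\<dots> = (1 - r) * (1 + h)" using q by simp
      also have "\<dots> = (1 - s) * (r * \<mu>)" using muid by (simp add: algebra_simps)
      finally have q2: "(1 - r) * \<alpha> * f * (1 - (1 + \<mu>) * f) = 1 - s" using mupos a by simp
      have "fhms_dm r \<alpha> s f m = \<mu> * f * ((1 - r) * \<alpha> * f * (1 - (1 + \<mu>) * f) - (1 - s))"
        unfolding fhms_dm_def mm by (simp add: algebra_simps)
      hence d2: "fhms_dm r \<alpha> s f m = 0" using q2 by simp
      show "(f, m) \<in> interior_equilibria r \<alpha> h s"
        using d1 d2 fp mupos mm by (simp add: interior_equilibria_def)
    qed
  qed
  show ?thesis using D0 p1 p2 set by (simp add: D_def \<mu>_def)
qed

end
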